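(* Let $m \geq d > 0$ be integers and let $A(x)=\sum_{i=0}^d a_i x^i\in\mathbb{Z}[x]$ be a primitive polynomial of degree $d$ with $a_0\neq 0$. Let $\theta_1,\dots,\theta_m$ be real numbers such that $\theta_1,\dots,\theta_d$ are linearly independent over $\mathbb{Q}$ and $\sum_{i=0}^d a_i\theta_{j+i}=0$ for all $1\le j\le m-d$. Then the set \[ S_{\theta,m}=\{\pi_m(t\theta_1,t\theta_2,\dots,t\theta_m) : t\in\mathbb{R}\}\subseteq \mathbb{T}^m \] is $\epsilon$-dense for every \[ \epsilon \;\geq\; \min\left\{\frac{1}{M(A(x/2))},\ \frac{2^d}{M(A(2x))}\right\}, \] and moreover this minimum is at most $2^{[d/2]}/M(A(x))$. In particular, $S_{\theta,m}$ is $\epsilon$-dense for every $\epsilon\ge 2^{[d/2]}/M(A(x))$ (e.g. with $\theta_i=\alpha^{i-1}$ for a real algebraic number $\alpha$ of degree $d$ with minimal primitive integral polynomial $A$).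
   Context: $\mathbb{T}^m=\mathbb{R}^m/\mathbb{Z}^m$ and $\pi_m:\mathbb{R}^m\to\mathbb{T}^m$ is the canonical projection. For $\epsilon>0$ let $I_\epsilon=[-\epsilon/2,\epsilon/2]^m\subseteq\mathbb{R}^m$ and $C_\epsilon=\pi_m(I_\epsilon)$. A set $S\subseteq\mathbb{T}^m$ is called $\epsilon$-dense if $S+C_{\bar\epsilon}=\mathbb{T}^m$ for every $\bar\epsilon>\epsilon$ (equivalently, $S+C_\epsilon$ is dense in $\mathbb{T}^m$). For a polynomial $P(x)=c_d\prod_{i=1}^d(x-\alpha_i)\in\mathbb{C}[x]$ with $c_d\ne0$ and nonzero constant term, its Mahler measure is $M(P)=|c_d|\prod_{i=1}^d\max\{1,|\alpha_i|\}$. $[d/2]$ denotes the integer part of $d/2$. *)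

theory Defs
  imports "HOL-Analysis.Analysis" "HOL-Computational_Algebra.Computational_Algebra"
begin

definition mahler_measure :: "complex poly \<Rightarrow> real" where
  "mahler_measure p = cmod (lead_coeff p) * prod_mset (image_mset (\<lambda>\<alpha>. max 1 (cmod \<alpha>)) (proots p))"

text \<open>Points of the torus T^m are represented by their lifts in R^m, given as functions on the
  index set {1..m}. A set S of lifts projects to an eps-dense subset of T^m iff for every eps' > eps,
  S + C_eps' = T^m, i.e. every x in R^m is congruent mod Z^m to s + u with s in S and u in I_eps'.\<close>
definition eps_dense :: "nat \<Rightarrow> real \<Rightarrow> (nat \<Rightarrow> real) set \<Rightarrow> bool" where
  "eps_dense m \<epsilon> S \<longleftrightarrow>
     (\<forall>\<epsilon>'>\<epsilon>. \<forall>x::nat \<Rightarrow> real. \<exists>s\<in>S. \<exists>k::nat \<Rightarrow> int. \<exists>u::nat \<Rightarrow> real.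
        (\<forall>i\<in>{1..m}. \<bar>u i\<bar> \<le> \<epsilon>' / 2 \<and> x i = s i + u i + of_int (k i)))"

definition S_line :: "(nat \<Rightarrow> real) \<Rightarrow> (nat \<Rightarrow> real) set" where
  "S_line \<theta> = {(\<lambda>i. t * \<theta> i) | t. True}"

end

theory Submission
  imports Defs
begin


definition conv :: "'a::comm_semiring_1 poly \<Rightarrow> (nat \<Rightarrow> 'a) \<Rightarrow> nat \<Rightarrow> 'a" where
  "conv p y j = (\<Sum>i\<le>degree p. coeff p i * y (j + i))"

lemma conv_bound:
  assumes "degree p \<le> N"
  shows "conv p y j = (\<Sum>i\<le>N. coeff p i * y (j + i))"
  unfolding conv_def
  by (rule sum.mono_neutral_left) (use assms in \<open>auto simp: coeff_eq_0\<close>)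

lemma conv_add: "conv (p + q) y j = conv p y j + conv q y j"
proof -
  define N where "N = max (degree p) (degree q)"
  have "degree (p+q) \<le> N" unfolding N_def by (rule degree_add_le) auto
  then show ?thesis
    by (simp add: conv_bound[of _ N] N_def sum.distrib algebra_simps)
qed

lemma conv_smult: "conv (smult a p) y j = a * conv p y j"
proof -
  have "conv (smult a p) y j = (\<Sum>i\<le>degree p. coeff (smult a p) i * y (j + i))"
    by (rule conv_bound) (rule degree_smult_le)
  then show ?thesis by (simp add: conv_def sum_distrib_left mult.assoc)
qed

lemma conv_pCons0: "conv (pCons 0 p) y j = conv p y (Suc j)"
proof -
  have "conv (pCons 0 p) y j = (\<Sum>i\<le>Suc (degree p). coeff (pCons 0 p) i * y (j + i))"
    by (rule conv_bound) (simp add: degree_pCons_le)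
  also have "\<dots> = (\<Sum>i\<le>degree p. coeff p i * y (Suc j + i))"
    by (subst sum.atMost_Suc_shift) simp
  finally show ?thesis by (simp add: conv_def)
qed

lemma conv_const: "conv [:a:] y j = a * y j"
  by (simp add: conv_def)

lemma conv_mult: "conv (p * q) y j = conv p (conv q y) j"
proof (induction p arbitrary: j)
  case 0
  then show ?case by (simp add: conv_def)
next
  case (pCons a p)
  have "pCons a p * q = smult a q + pCons 0 (p * q)" by simp
  then have "conv (pCons a p * q) y j = a * conv q y j + conv (p*q) y (Suc j)"
    by (simp only: conv_add conv_smult conv_pCons0)
  also have "\<dots> = a * conv q y j + conv p (conv q y) (Suc j)" using pCons.IH by simp
  also have "\<dots> = conv (pCons a p) (conv q y) j"
  proof -
    have "pCons a p = [:a:] + pCons 0 p" by simp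
    then show ?thesis by (metis conv_add conv_const conv_pCons0)
  qed
  finally show ?case .
qed

lemma conv_cong: "(\<And>i. i \<le> degree p \<Longrightarrow> y (j + i) = z (j + i)) \<Longrightarrow> conv p y j = conv p z j"
  by (simp add: conv_def)

lemma conv_of_real:
  "conv (map_poly of_real p) (\<lambda>i. of_real (y i) :: complex) j = of_real (conv p y j)"
  by (simp add: conv_def degree_map_poly coeff_map_poly)

lemma conv_of_int_real:
  "conv (map_poly of_int p) (\<lambda>i. of_int (y i) :: real) j = of_int (conv p y j)"
  by (simp add: conv_def degree_map_poly coeff_map_poly)

lemma conv_diff: "conv (p::'a::comm_ring_1 poly) (\<lambda>i. y i - z i) j = conv p y j - conv p z j"
  by (simp add: conv_def algebra_simps sum_subtractf)

lemma conv_plus_seq: "conv p (\<lambda>i. y i + z i) j = conv p y j + conv p z j"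
  by (simp add: conv_def algebra_simps sum.distrib)

lemma conv_Re: assumes "\<And>i. Im (coeff p i) = 0" shows "Re (conv p u j) = conv (map_poly Re p) (\<lambda>i. Re (u i)) j"
proof -
  have "conv (map_poly Re p) (\<lambda>i. Re (u i)) j = (\<Sum>i\<le>degree p. coeff (map_poly Re p) i * Re (u (j+i)))"
    by (rule conv_bound) (rule map_poly_degree_leq)
  then show ?thesis using assms by (simp add: conv_def coeff_map_poly Re_sum)
qed



lemma conv_upd0:
  fixes g :: "'a::comm_ring_1 poly"
  shows "conv g (w(j0 := v)) j0 = conv g (w(j0 := z)) j0 + coeff g 0 * (v - z)"
proof -
  have "conv g (w(j0 := v)) j0 - conv g (w(j0 := z)) j0 = conv g (\<lambda>i. (w(j0 := v)) i - (w(j0 := z)) i) j0"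
    by (rule conv_diff[symmetric])
  also have "\<dots> = (\<Sum>i\<le>degree g. coeff g i * (if i = 0 then v - z else 0))"
    unfolding conv_def by (intro sum.cong) auto
  also have "\<dots> = (\<Sum>i\<le>degree g. if i = 0 then coeff g 0 * (v - z) else 0)"
    by (intro sum.cong) auto
  also have "\<dots> = coeff g 0 * (v - z)"
    by (subst sum.delta) auto
  finally show ?thesis by (simp add: algebra_simps)
qed

lemma round_close: "\<bar>real_of_int (round s) - s\<bar> \<le> 1/2"
  by (rule of_int_round_abs_le)

lemma greedy_back:
  fixes g :: "real poly" and t :: "nat \<Rightarrow> real" and n :: nat
  assumes k0: "coeff g 0 \<noteq> 0"
  shows "\<exists>w. (\<forall>j. \<bar>w j - t j\<bar> \<le> 1 / (2 * \<bar>coeff g 0\<bar>)) \<and> (\<forall>j. 1 \<le> j \<longrightarrow> j \<le> n \<longrightarrow> conv g w j \<in> \<int>)"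
proof -
  define \<kappa> where "\<kappa> = coeff g 0"
  have P: "\<exists>w. (\<forall>j. \<bar>w j - t j\<bar> \<le> 1 / (2 * \<bar>\<kappa>\<bar>)) \<and> (\<forall>j. n - k < j \<longrightarrow> j \<le> n \<longrightarrow> conv g w j \<in> \<int>)"
    if "k \<le> n" for k
    using that
  proof (induction k)
    case 0
    show ?case by (intro exI[of _ t]) (auto simp: k0 \<kappa>_def)
  next
    case (Suc k)
    then obtain w where wb: "\<forall>j. \<bar>w j - t j\<bar> \<le> 1 / (2 * \<bar>\<kappa>\<bar>)"
      and wi: "\<forall>j. n - k < j \<longrightarrow> j \<le> n \<longrightarrow> conv g w j \<in> \<int>" by auto
    define j0 where "j0 = n - k"
    define s where "s = conv g (w(j0 := t j0)) j0"
    define v where "v = t j0 + (of_int (round s) - s) / \<kappa>"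
    define w' where "w' = w(j0 := v)"
    have "conv g w' j0 = s + \<kappa> * (v - t j0)"
      unfolding w'_def s_def \<kappa>_def by (rule conv_upd0)
    also have "\<dots> = of_int (round s)" using k0 by (simp add: v_def \<kappa>_def)
    finally have c0: "conv g w' j0 \<in> \<int>" by simp
    have c1: "conv g w' j = conv g w j" if "j0 < j" for j
      unfolding w'_def by (rule conv_cong) (use that in auto)
    have vb: "\<bar>v - t j0\<bar> \<le> 1 / (2 * \<bar>\<kappa>\<bar>)"
    proof -
      have "\<bar>v - t j0\<bar> = \<bar>of_int (round s) - s\<bar> / \<bar>\<kappa>\<bar>" by (simp add: v_def abs_divide)
      also have "\<dots> \<le> (1/2) / \<bar>\<kappa>\<bar>" using k0 round_close[of s]
        by (intro divide_right_mono) (auto simp: \<kappa>_def)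
      finally show ?thesis by simp
    qed
    show ?case
    proof (intro exI[of _ w'] conjI allI impI)
      fix j show "\<bar>w' j - t j\<bar> \<le> 1 / (2 * \<bar>\<kappa>\<bar>)" using wb vb by (simp add: w'_def)
    next
      fix j assume "n - Suc k < j" "j \<le> n"
      then consider "j = j0" | "j0 < j" "n - k < j" using Suc.prems unfolding j0_def by linarith
      then show "conv g w' j \<in> \<int>"
      proof cases
        case 1 then show ?thesis using c0 by simp
      next
        case 2 then show ?thesis using c1 wi \<open>j \<le> n\<close> by simp
      qed
    qed
  qed
  from P[of n] show ?thesis by (auto simp: \<kappa>_def)
qed

definition linprod :: "complex multiset \<Rightarrow> complex poly" where
  "linprod R = (\<Prod>\<alpha>\<in>#R. [:-\<alpha>, 1:])"

lemma linprod_empty [simp]: "linprod {#} = 1" by (simp add: linprod_def)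
lemma linprod_add_mset [simp]: "linprod (add_mset a R) = [:-a, 1:] * linprod R"
  by (simp add: linprod_def)
lemma linprod_union: "linprod (R + S) = linprod R * linprod S"
  by (simp add: linprod_def)

lemma conv_one: "conv 1 u j = u j" by (simp add: conv_def)

lemma inv_forward:
  fixes R :: "complex multiset"
  assumes "\<forall>\<gamma>\<in>#R. cmod \<gamma> \<le> 1/2" "\<forall>j. cmod (\<delta> j) \<le> D"
  shows "\<exists>u. (\<forall>j. cmod (u j) \<le> 2 ^ size R * D) \<and> (\<forall>j. conv (linprod R) u j = \<delta> j)"
  using assms
proof (induction R arbitrary: \<delta> D)
  case empty
  then show ?case by (intro exI[of _ \<delta>]) (auto simp: conv_one)
next
  case (add \<gamma> R)
  define v where "v = rec_nat 0 (\<lambda>j vj. \<delta> j + \<gamma> * vj)"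
  have v0: "v 0 = 0" and vS: "v (Suc j) = \<delta> j + \<gamma> * v j" for j by (simp_all add: v_def)
  have g: "cmod \<gamma> \<le> 1/2" using add.prems by simp
  have vb: "cmod (v j) \<le> 2 * D" for j
  proof (induction j)
    case 0
    have "0 \<le> D" using add.prems(2) norm_ge_zero[of "\<delta> 0"] by (meson order_trans)
    then show ?case by (simp add: v0)
  next
    case (Suc j)
    have "cmod (v (Suc j)) \<le> cmod (\<delta> j) + cmod \<gamma> * cmod (v j)"
      unfolding vS by (metis norm_mult norm_triangle_ineq)
    also have "\<dots> \<le> D + 1/2 * (2 * D)"
      using add.prems(2) g Suc by (intro add_mono mult_mono) auto
    finally show ?case by simp
  qed
  have cv: "conv [:-\<gamma>, 1:] v j = \<delta> j" for j
    by (simp add: conv_def vS)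
  from add.IH[of v "2 * D"] add.prems vb obtain u where
    ub: "\<forall>j. cmod (u j) \<le> 2 ^ size R * (2 * D)" and uc: "\<forall>j. conv (linprod R) u j = v j" by auto
  show ?case
  proof (intro exI[of _ u] conjI allI)
    fix j show "cmod (u j) \<le> 2 ^ size (add_mset \<gamma> R) * D" using ub by (simp add: mult_ac)
  next
    fix j
    have "conv (linprod (add_mset \<gamma> R)) u j = conv [:-\<gamma>, 1:] (conv (linprod R) u) j"
      by (simp only: linprod_add_mset conv_mult)
    also have "\<dots> = conv [:-\<gamma>, 1:] v j" using uc by (metis ext)
    finally show "conv (linprod (add_mset \<gamma> R)) u j = \<delta> j" using cv by simp
  qed
qed



lemma prod_mset_split:
  "(\<Prod>\<alpha>\<in>#R. f \<alpha>) = (\<Prod>\<alpha>\<in>#filter_mset P R. f \<alpha>) * (\<Prod>\<alpha>\<in>#filter_mset (\<lambda>\<alpha>. \<not> P \<alpha>) R. (f \<alpha> :: 'a::comm_monoid_mult))"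
  by (induction R) (auto simp: mult_ac)

lemma prod_mset_const: "(\<Prod>\<alpha>\<in>#M. (k::'a::comm_monoid_mult)) = k ^ size M"
  by (induction M) auto

lemma norm_prod_mset: "cmod (\<Prod>\<alpha>\<in>#M. f \<alpha>) = (\<Prod>\<alpha>\<in>#M. cmod (f \<alpha>))"
  by (induction M) (auto simp: norm_mult)

lemma prod_mset_cong': "(\<And>\<alpha>. \<alpha> \<in># M \<Longrightarrow> f \<alpha> = g \<alpha>) \<Longrightarrow> (\<Prod>\<alpha>\<in>#M. f \<alpha>) = (\<Prod>\<alpha>\<in>#M. g \<alpha>)"
  by (metis image_mset_cong)

lemma poly_linprod: "poly (linprod M) x = (\<Prod>\<alpha>\<in>#M. x - \<alpha>)"
  by (induction M) (auto simp: algebra_simps)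

lemma linprod_cnj: "map_poly cnj (linprod M) = linprod (image_mset cnj M)"
proof -
  have "poly (map_poly cnj (linprod M)) x = poly (linprod (image_mset cnj M)) x" for x
    by (induction M) (auto simp: poly_linprod)
  then show ?thesis by (intro poly_ext) auto
qed

lemma filter_cnj_inv:
  assumes "image_mset cnj R = R" "\<And>\<alpha>. P (cnj \<alpha>) = P \<alpha>"
  shows "image_mset cnj (filter_mset P R) = filter_mset P R"
proof -
  have "image_mset cnj (filter_mset P R) = image_mset cnj (filter_mset (P \<circ> cnj) R)"
    using assms(2) by (simp add: o_def)
  also have "\<dots> = filter_mset P (image_mset cnj R)"
    by (induction R) auto
  finally show ?thesis using assms(1) by simp
qed

lemma linprod_real:
  assumes "image_mset cnj M = M"
  shows "Im (coeff (linprod M) i) = 0"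
proof -
  have "map_poly cnj (linprod M) = linprod M" using assms by (simp add: linprod_cnj)
  then have "cnj (coeff (linprod M) i) = coeff (linprod M) i"
    by (metis coeff_map_poly complex_cnj_zero)
  then show ?thesis by (metis Reals_cnj_iff complex_is_Real_iff)
qed

lemma of_real_Re_poly:
  assumes "\<And>i. Im (coeff p i) = 0"
  shows "map_poly of_real (map_poly Re p) = p"
  by (rule poly_eqI) (simp add: coeff_map_poly assms complex_eq_iff)

lemma coeff0_linprod: "coeff (linprod M) 0 = (\<Prod>\<alpha>\<in>#M. - \<alpha>)"
  by (simp add: poly_0_coeff_0[symmetric] poly_linprod)

lemma cover1:
  fixes a :: "real poly" and c :: real and R :: "complex multiset" and n :: nat and x :: "nat \<Rightarrow> real"
  assumes fac: "map_poly of_real a = smult (of_real c) (linprod R)"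
    and c0: "c \<noteq> 0" and cj: "image_mset cnj R = R"
  shows "\<exists>y. (\<forall>j. \<bar>y j - x j\<bar> \<le> 1 / (2 * (\<bar>c\<bar> * (\<Prod>\<alpha>\<in>#R. max (1/2) (cmod \<alpha>)))))
             \<and> (\<forall>j. 1 \<le> j \<longrightarrow> j \<le> n \<longrightarrow> conv a y j \<in> \<int>)"
proof -
  define RB where "RB = filter_mset (\<lambda>\<alpha>. 1/2 \<le> cmod \<alpha>) R"
  define RC where "RC = filter_mset (\<lambda>\<alpha>. \<not> 1/2 \<le> cmod \<alpha>) R"
  have RBC: "R = RB + RC" unfolding RB_def RC_def by (rule multiset_partition)
  have cjB: "image_mset cnj RB = RB" unfolding RB_def by (rule filter_cnj_inv[OF cj]) simp
  have cjC: "image_mset cnj RC = RC" unfolding RC_def by (rule filter_cnj_inv[OF cj]) simp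
  define PB where "PB = smult (of_real c) (linprod RB)"
  have PBr: "Im (coeff PB i) = 0" for i using linprod_real[OF cjB] by (simp add: PB_def)
  have PCr: "Im (coeff (linprod RC) i) = 0" for i using linprod_real[OF cjC] by simp
  define G where "G = map_poly Re PB"
  define Q where "Q = map_poly Re (linprod RC)"
  have G_eq: "map_poly of_real G = PB" unfolding G_def by (rule of_real_Re_poly[OF PBr])
  have Q_eq: "map_poly of_real Q = linprod RC" unfolding Q_def by (rule of_real_Re_poly[OF PCr])
  define \<kappa> where "\<kappa> = coeff G 0"
  have k_eq: "of_real \<kappa> = of_real c * (\<Prod>\<alpha>\<in>#RB. - \<alpha>)"
  proof -
    have "(of_real \<kappa> :: complex) = coeff (map_poly of_real G) 0" by (simp add: \<kappa>_def coeff_map_poly)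
    also have "\<dots> = of_real c * (\<Prod>\<alpha>\<in>#RB. - \<alpha>)" by (simp add: G_eq PB_def coeff0_linprod)
    finally show ?thesis .
  qed
  have k_abs: "\<bar>\<kappa>\<bar> = \<bar>c\<bar> * (\<Prod>\<alpha>\<in>#RB. cmod \<alpha>)"
  proof -
    have "\<bar>\<kappa>\<bar> = cmod (of_real \<kappa> :: complex)" by simp
    also have "\<dots> = \<bar>c\<bar> * (\<Prod>\<alpha>\<in>#RB. cmod \<alpha>)" by (simp add: k_eq norm_mult norm_prod_mset)
    finally show ?thesis .
  qed
  have RBpos: "(\<Prod>\<alpha>\<in>#RB. cmod \<alpha>) > 0"
  proof -
    have "\<forall>\<alpha>\<in>#M. 1/2 \<le> cmod \<alpha> \<Longrightarrow> (\<Prod>\<alpha>\<in>#M. cmod \<alpha>) > 0" for M :: "complex multiset"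
      by (induction M) (auto intro!: mult_pos_pos)
    then show ?thesis by (auto simp: RB_def)
  qed
  have "\<bar>c\<bar> * (\<Prod>\<alpha>\<in>#RB. cmod \<alpha>) > 0" using c0 RBpos by (intro mult_pos_pos) auto
  then have k0: "\<kappa> \<noteq> 0" using k_abs by (metis abs_zero less_irrefl)
  define t where "t = conv Q x"
  obtain w where wb: "\<forall>j. \<bar>w j - t j\<bar> \<le> 1 / (2 * \<bar>\<kappa>\<bar>)"
    and wi: "\<forall>j. 1 \<le> j \<longrightarrow> j \<le> n \<longrightarrow> conv G w j \<in> \<int>"
    using greedy_back[of G t n] k0 unfolding \<kappa>_def by blast
  define \<delta> where "\<delta> = (\<lambda>j. w j - t j)"
  have RCs: "\<forall>\<gamma>\<in>#RC. cmod \<gamma> \<le> 1/2" by (auto simp: RC_def)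
  have db: "\<forall>j. cmod (of_real (\<delta> j) :: complex) \<le> 1 / (2 * \<bar>\<kappa>\<bar>)" using wb by (simp add: \<delta>_def flip: of_real_diff)
  obtain u where ub: "\<forall>j. cmod (u j) \<le> 2 ^ size RC * (1 / (2 * \<bar>\<kappa>\<bar>))"
    and uc: "\<forall>j. conv (linprod RC) u j = of_real (\<delta> j)"
    using inv_forward[OF RCs db] by blast
  define ur where "ur = (\<lambda>j. Re (u j))"
  have urc: "conv Q ur j = \<delta> j" for j
  proof -
    have "conv Q ur j = Re (conv (linprod RC) u j)"
      unfolding Q_def ur_def by (rule conv_Re[OF PCr, symmetric])
    then show ?thesis using uc by simp
  qed
  define y where "y = (\<lambda>j. x j + ur j)"
  have Qy: "conv Q y j = w j" for j
    unfolding y_def by (simp add: conv_plus_seq urc t_def \<delta>_def)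
  have ay: "conv a y j = conv G w j" for j
  proof -
    have "(of_real (conv a y j) :: complex) = conv (map_poly of_real a) (\<lambda>i. of_real (y i)) j"
      by (simp add: conv_of_real)
    also have "\<dots> = conv (PB * linprod RC) (\<lambda>i. of_real (y i)) j"
      by (simp add: fac RBC linprod_union PB_def mult_smult_left)
    also have "\<dots> = conv PB (conv (map_poly of_real Q) (\<lambda>i. of_real (y i))) j"
      by (simp add: conv_mult Q_eq)
    also have "\<dots> = conv (map_poly of_real G) (\<lambda>i. of_real (w i)) j"
    proof -
      have "conv (map_poly of_real Q) (\<lambda>i. of_real (y i)) = (\<lambda>i. (of_real (w i) :: complex))"
        by (rule ext) (simp add: conv_of_real Qy)
      then show ?thesis by (simp add: G_eq)
    qed
    also have "\<dots> = of_real (conv G w j)" by (simp add: conv_of_real)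
    finally show ?thesis by simp
  qed
  have bnd: "\<bar>c\<bar> * (\<Prod>\<alpha>\<in>#R. max (1/2) (cmod \<alpha>)) = \<bar>\<kappa>\<bar> * (1/2) ^ size RC"
  proof -
    have "(\<Prod>\<alpha>\<in>#R. max (1/2) (cmod \<alpha>)) = (\<Prod>\<alpha>\<in>#RB. max (1/2) (cmod \<alpha>)) * (\<Prod>\<alpha>\<in>#RC. max (1/2) (cmod \<alpha>))"
      unfolding RB_def RC_def by (rule prod_mset_split)
    also have "(\<Prod>\<alpha>\<in>#RB. max (1/2) (cmod \<alpha>)) = (\<Prod>\<alpha>\<in>#RB. cmod \<alpha>)"
      by (rule prod_mset_cong') (auto simp: RB_def)
    also have "(\<Prod>\<alpha>\<in>#RC. max (1/2) (cmod \<alpha>)) = (\<Prod>\<alpha>\<in>#RC. 1/2)"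
      by (rule prod_mset_cong') (auto simp: RC_def)
    also have "\<dots> = (1/2) ^ size RC" by (rule prod_mset_const)
    finally show ?thesis by (simp add: k_abs mult_ac)
  qed
  show ?thesis
  proof (intro exI[of _ y] conjI allI impI)
    fix j
    have "\<bar>y j - x j\<bar> = \<bar>Re (u j)\<bar>" by (simp add: y_def ur_def)
    also have "\<dots> \<le> cmod (u j)" by (rule abs_Re_le_cmod)
    also have "\<dots> \<le> 2 ^ size RC * (1 / (2 * \<bar>\<kappa>\<bar>))" using ub by simp
    also have "\<dots> = 1 / (2 * (\<bar>\<kappa>\<bar> * (1/2) ^ size RC))" by (simp add: power_one_over field_simps)
    finally show "\<bar>y j - x j\<bar> \<le> 1 / (2 * (\<bar>c\<bar> * (\<Prod>\<alpha>\<in>#R. max (1/2) (cmod \<alpha>))))" by (simp add: bnd)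
  next
    fix j assume "1 \<le> j" "j \<le> n"
    then show "conv a y j \<in> \<int>" using wi ay by simp
  qed
qed



lemma lead_coeff_linprod: "lead_coeff (linprod M) = 1"
proof (induction M)
  case (add a M)
  have "lead_coeff (linprod (add_mset a M)) = lead_coeff [:-a, 1:] * lead_coeff (linprod M)"
    by (simp only: linprod_add_mset lead_coeff_mult)
  then show ?case using add.IH by simp
qed simp

lemma linprod_nz: "linprod M \<noteq> 0"
  using lead_coeff_linprod[of M] by auto

lemma proots_linprod: "proots (linprod M) = M"
proof (induction M)
  case (add a M)
  have "proots (linprod (add_mset a M)) = proots [:-a, 1:] + proots (linprod M)"
    unfolding linprod_add_mset by (rule proots_mult) (auto simp: linprod_nz)
  then show ?case using add.IH by simp
qed simp


lemma mahler_linprod: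
  assumes "c \<noteq> 0"
  shows "mahler_measure (smult c (linprod M)) = cmod c * (\<Prod>\<alpha>\<in>#M. max 1 (cmod \<alpha>))"
  using assms by (simp add: mahler_measure_def proots_linprod lead_coeff_linprod)

lemma linprod_pcompose:
  assumes "s \<noteq> 0"
  shows "linprod M \<circ>\<^sub>p [:0, s:] = smult (s ^ size M) (linprod (image_mset (\<lambda>\<alpha>. \<alpha> / s) M))"
proof (induction M)
  case (add a M)
  have "[:-a, 1:] \<circ>\<^sub>p [:0, s:] = smult s [:-(a/s), 1:]"
    using assms by (simp add: pcompose_pCons)
  have "linprod (add_mset a M) \<circ>\<^sub>p [:0, s:] = ([:-a, 1:] \<circ>\<^sub>p [:0, s:]) * (linprod M \<circ>\<^sub>p [:0, s:])"
    by (simp only: linprod_add_mset pcompose_mult)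
  also have "\<dots> = smult (s * s ^ size M) ([:-(a/s), 1:] * linprod (image_mset (\<lambda>\<alpha>. \<alpha> / s) M))"
    by (simp only: \<open>[:-a, 1:] \<circ>\<^sub>p [:0, s:] = smult s [:-(a/s), 1:]\<close> add.IH mult_smult_left mult_smult_right smult_smult mult.commute[of "s ^ size M" s])
  also have "[:-(a/s), 1:] * linprod (image_mset (\<lambda>\<alpha>. \<alpha> / s) M) = linprod (image_mset (\<lambda>\<alpha>. \<alpha> / s) (add_mset a M))"
    by (simp only: image_mset_add_mset linprod_add_mset)
  finally show ?case by simp
qed (simp add: pcompose_1)

lemma prod_scale_max:
  assumes "s > 0"
  shows "s ^ size M * (\<Prod>\<alpha>\<in>#M. max 1 (cmod \<alpha> / s)) = (\<Prod>\<alpha>\<in>#M. max s (cmod \<alpha>))"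
proof (induction M)
  case (add a M)
  have "s * max 1 (cmod a / s) = max s (cmod a)" using assms
    by (simp add: max_def field_simps)
  have "s ^ size (add_mset a M) * (\<Prod>\<alpha>\<in>#add_mset a M. max 1 (cmod \<alpha> / s))
      = (s * max 1 (cmod a / s)) * (s ^ size M * (\<Prod>\<alpha>\<in>#M. max 1 (cmod \<alpha> / s)))"
    by (simp add: mult_ac)
  then show ?case using add.IH \<open>s * max 1 (cmod a / s) = max s (cmod a)\<close> by simp
qed simp

lemma mahler_compose:
  assumes "c \<noteq> 0" "s \<noteq> 0"
  shows "mahler_measure (smult c (linprod M) \<circ>\<^sub>p [:0, s:]) = cmod c * (\<Prod>\<alpha>\<in>#M. max (cmod s) (cmod \<alpha>))"
proof -
  have "mahler_measure (smult c (linprod M) \<circ>\<^sub>p [:0, s:]) =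
        mahler_measure (smult (c * s ^ size M) (linprod (image_mset (\<lambda>\<alpha>. \<alpha> / s) M)))"
    using assms by (simp add: pcompose_smult linprod_pcompose)
  also have "\<dots> = cmod c * (cmod s ^ size M * (\<Prod>\<alpha>\<in>#M. max 1 (cmod \<alpha> / cmod s)))"
  proof -
    have "(\<Prod>\<alpha>\<in>#image_mset (\<lambda>\<alpha>. \<alpha> / s) M. max 1 (cmod \<alpha>)) = (\<Prod>\<alpha>\<in>#M. max 1 (cmod \<alpha> / cmod s))"
      by (induction M) (simp_all add: norm_divide)
    then show ?thesis using assms by (simp add: mahler_linprod norm_mult norm_power)
  qed
  also have "\<dots> = cmod c * (\<Prod>\<alpha>\<in>#M. max (cmod s) (cmod \<alpha>))"
    using assms by (simp add: prod_scale_max)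
  finally show ?thesis .
qed

lemma reflect_lin: "reflect_poly [:-a, 1:] = [:1, -(a::complex):]"
  by (simp add: reflect_poly_def cCons_def)

lemma reflect_linprod:
  assumes "0 \<notin># M"
  shows "reflect_poly (linprod M) = smult (\<Prod>\<alpha>\<in>#M. - \<alpha>) (linprod (image_mset inverse M))"
  using assms
proof (induction M)
  case (add a M)
  have a0: "a \<noteq> 0" using add.prems by auto
  have "[:1, -a:] = smult (-a) [:- inverse a, 1:]" using a0 by simp
  have "reflect_poly (linprod (add_mset a M)) = reflect_poly [:-a, 1:] * reflect_poly (linprod M)"
    by (simp only: linprod_add_mset reflect_poly_mult)
  also have "\<dots> = smult (-a) [:- inverse a, 1:] * smult (\<Prod>\<alpha>\<in>#M. - \<alpha>) (linprod (image_mset inverse M))"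
    using add.IH add.prems \<open>[:1, -a:] = smult (-a) [:- inverse a, 1:]\<close> by (simp only: reflect_lin) simp
  also have "\<dots> = smult (-a * (\<Prod>\<alpha>\<in>#M. - \<alpha>)) ([:- inverse a, 1:] * linprod (image_mset inverse M))"
    by (simp only: mult_smult_left mult_smult_right smult_smult mult.commute[of "\<Prod>\<alpha>\<in>#M. - \<alpha>" "-a"])
  also have "[:- inverse a, 1:] * linprod (image_mset inverse M) = linprod (image_mset inverse (add_mset a M))"
    by (simp only: image_mset_add_mset linprod_add_mset)
  finally show ?case by simp
qed (simp add: reflect_poly_def)

lemma reflect_map_of_real:
  "map_poly (of_real :: real \<Rightarrow> complex) (reflect_poly p) = reflect_poly (map_poly of_real p)"
  by (rule poly_eqI) (simp add: coeff_reflect_poly coeff_map_poly degree_map_poly)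

lemma conv_reflect:
  fixes a :: "'a::comm_semiring_1 poly"
  assumes "coeff a 0 \<noteq> 0" "degree a = d" "1 \<le> j" "j \<le> n"
    and "\<And>k. k \<le> d \<Longrightarrow> y (j + k) = y' (n + 1 - j + d - k)"
  shows "conv a y j = conv (reflect_poly a) y' (n + 1 - j)"
proof -
  define j' where "j' = n + 1 - j"
  have "conv (reflect_poly a) y' j' = (\<Sum>i<Suc d. coeff a (d - i) * y' (j' + i))"
    using assms by (simp add: conv_def coeff_reflect_poly lessThan_Suc_atMost)
  also have "\<dots> = (\<Sum>i<Suc d. (\<lambda>k. coeff a k * y' (j' + d - k)) (Suc d - Suc i))"
    by (intro sum.cong) auto
  also have "\<dots> = (\<Sum>k<Suc d. coeff a k * y' (j' + d - k))"
    by (rule sum.nat_diff_reindex)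
  also have "\<dots> = (\<Sum>k<Suc d. coeff a k * y (j + k))"
    by (intro sum.cong) (use assms in \<open>auto simp: j'_def\<close>)
  also have "\<dots> = conv a y j" using assms by (simp add: conv_def lessThan_Suc_atMost)
  finally show ?thesis by (simp add: j'_def)
qed

lemma prod_inv_max:
  assumes "0 \<notin># M"
  shows "(\<Prod>\<alpha>\<in>#M. cmod \<alpha>) * (\<Prod>\<alpha>\<in>#image_mset inverse M. max (1/2) (cmod \<alpha>)) = (\<Prod>\<alpha>\<in>#M. max 1 (cmod \<alpha> / 2))"
  using assms
proof (induction M)
  case (add a M)
  have a0: "cmod a > 0" using add.prems by auto
  have e: "cmod a * max (1/2) (cmod (inverse a)) = max 1 (cmod a / 2)"
  proof -
    have "cmod (inverse a) = 1 / cmod a" by (simp add: norm_inverse divide_inverse)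
    then show ?thesis using a0 by (cases "cmod a \<le> 2") (auto simp: max_def field_simps norm_divide)
  qed
  have "(\<Prod>\<alpha>\<in>#add_mset a M. cmod \<alpha>) * (\<Prod>\<alpha>\<in>#image_mset inverse (add_mset a M). max (1/2) (cmod \<alpha>))
     = (cmod a * max (1/2) (cmod (inverse a))) * ((\<Prod>\<alpha>\<in>#M. cmod \<alpha>) * (\<Prod>\<alpha>\<in>#image_mset inverse M. max (1/2) (cmod \<alpha>)))"
    by (simp add: mult_ac)
  also have "\<dots> = max 1 (cmod a / 2) * (\<Prod>\<alpha>\<in>#M. max 1 (cmod \<alpha> / 2))"
    using add.IH add.prems e by simp
  finally show ?case by simp
qed simp

lemma cover2:
  fixes a :: "real poly" and c :: real and R :: "complex multiset" and n :: nat and x :: "nat \<Rightarrow> real"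
  assumes fac: "map_poly of_real a = smult (of_real c) (linprod R)"
    and c0: "c \<noteq> 0" and cj: "image_mset cnj R = R" and a0: "coeff a 0 \<noteq> 0"
  shows "\<exists>y. (\<forall>j. \<bar>y j - x j\<bar> \<le> 1 / (2 * (\<bar>c\<bar> * (\<Prod>\<alpha>\<in>#R. max 1 (cmod \<alpha> / 2)))))
             \<and> (\<forall>j. 1 \<le> j \<longrightarrow> j \<le> n \<longrightarrow> conv a y j \<in> \<int>)"
proof -
  define d where "d = degree a"
  define m where "m = n + d"
  define c' where "c' = coeff a 0"
  define R' where "R' = image_mset inverse R"
  have c'eq: "(of_real c' :: complex) = of_real c * (\<Prod>\<alpha>\<in>#R. - \<alpha>)"
  proof -
    have "(of_real c' :: complex) = coeff (map_poly of_real a) 0" by (simp add: c'_def coeff_map_poly)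
    then show ?thesis by (simp add: fac coeff0_linprod)
  qed
  have R0: "0 \<notin># R"
  proof
    assume "0 \<in># R"
    then have "0 \<in># image_mset uminus R" by (metis image_eqI set_image_mset minus_zero)
    then have "(\<Prod>\<alpha>\<in>#R. - \<alpha>) = 0" by (simp only: prod_mset_zero_iff)
    then have "(of_real c' :: complex) = 0" using c'eq by simp
    then have "c' = 0" by simp
    then show False using a0 by (simp add: c'_def)
  qed
  have fac': "map_poly of_real (reflect_poly a) = smult (of_real c') (linprod R')"
    by (simp add: reflect_map_of_real fac reflect_poly_smult reflect_linprod[OF R0] R'_def c'eq)
  have c'0: "c' \<noteq> 0" using a0 by (simp add: c'_def)
  have cj': "image_mset cnj R' = R'"
  proof -
    have "image_mset cnj R' = image_mset inverse (image_mset cnj R)"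
      unfolding R'_def by (simp add: multiset.map_comp o_def complex_cnj_inverse)
    then show ?thesis using cj by (simp add: R'_def)
  qed
  define x' where "x' = (\<lambda>l. x (m + 1 - l))"
  obtain y' where y'b: "\<forall>j. \<bar>y' j - x' j\<bar> \<le> 1 / (2 * (\<bar>c'\<bar> * (\<Prod>\<alpha>\<in>#R'. max (1/2) (cmod \<alpha>))))"
    and y'i: "\<forall>j. 1 \<le> j \<longrightarrow> j \<le> n \<longrightarrow> conv (reflect_poly a) y' j \<in> \<int>"
    using cover1[OF fac' c'0 cj', of x' n] by blast
  have eqb: "\<bar>c'\<bar> * (\<Prod>\<alpha>\<in>#R'. max (1/2) (cmod \<alpha>)) = \<bar>c\<bar> * (\<Prod>\<alpha>\<in>#R. max 1 (cmod \<alpha> / 2))"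
  proof -
    have "\<bar>c'\<bar> = \<bar>c\<bar> * (\<Prod>\<alpha>\<in>#R. cmod \<alpha>)"
    proof -
      have "\<bar>c'\<bar> = cmod (of_real c' :: complex)" by simp
      also have "\<dots> = \<bar>c\<bar> * (\<Prod>\<alpha>\<in>#R. cmod \<alpha>)" by (simp add: c'eq norm_mult norm_prod_mset)
      finally show ?thesis .
    qed
    then show ?thesis using prod_inv_max[OF R0] by (simp add: R'_def mult.assoc)
  qed
  define y where "y = (\<lambda>l. if 1 \<le> l \<and> l \<le> m then y' (m + 1 - l) else x l)"
  show ?thesis
  proof (intro exI[of _ y] conjI allI impI)
    fix l
    show "\<bar>y l - x l\<bar> \<le> 1 / (2 * (\<bar>c\<bar> * (\<Prod>\<alpha>\<in>#R. max 1 (cmod \<alpha> / 2))))"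
    proof (cases "1 \<le> l \<and> l \<le> m")
      case True
      then have "x' (m + 1 - l) = x l" by (simp add: x'_def)
      then show ?thesis using True y'b[rule_format, of "m + 1 - l"] eqb by (simp add: y_def)
    next
      case False
      have "(\<Prod>\<alpha>\<in>#R. max 1 (cmod \<alpha> / 2)) \<ge> 0" by (induction R) auto
      then have "0 \<le> 1 / (2 * (\<bar>c\<bar> * (\<Prod>\<alpha>\<in>#R. max 1 (cmod \<alpha> / 2))))"
        by simp
      moreover have "y l = x l" using False unfolding y_def by meson
      ultimately show ?thesis by simp
    qed
  next
    fix j assume j: "1 \<le> j" "j \<le> n"
    have "conv a y j = conv (reflect_poly a) y' (n + 1 - j)"
      by (rule conv_reflect[OF a0 d_def[symmetric] j]) (use j in \<open>auto simp: y_def m_def\<close>)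
    then show "conv a y j \<in> \<int>" using y'i j by simp
  qed
qed



lemma conv_scale_seq: "conv p (\<lambda>i. c * y i) j = c * conv p y j"
  by (simp add: conv_def sum_distrib_left mult_ac)

lemma conv_delta:
  fixes p :: "'a::comm_semiring_1 poly"
  shows "conv p (\<lambda>i. if i = t then v else 0) j = (if j \<le> t \<and> t - j \<le> degree p then coeff p (t - j) * v else 0)"
proof -
  have "conv p (\<lambda>i. if i = t then v else 0) j = (\<Sum>i\<le>degree p. if i = t - j \<and> j \<le> t then coeff p (t - j) * v else 0)"
    unfolding conv_def by (intro sum.cong) auto
  also have "\<dots> = (if j \<le> t \<and> t - j \<le> degree p then coeff p (t - j) * v else 0)"
    by (cases "j \<le> t") (auto simp: sum.delta)
  finally show ?thesis .
qed

lemma conv_upd: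
  fixes p :: "'a::comm_ring_1 poly"
  shows "conv p (K(t := K t + v)) j = conv p K j + (if j \<le> t \<and> t - j \<le> degree p then coeff p (t - j) * v else 0)"
proof -
  have "K(t := K t + v) = (\<lambda>i. K i + (if i = t then v else 0))" by auto
  then show ?thesis by (simp only: conv_plus_seq conv_delta)
qed

lemma scale_ext:
  fixes A :: "int poly" and f n :: "nat \<Rightarrow> int"
  assumes d: "degree A = d"
  shows "\<exists>K. (\<forall>i. i \<le> d \<longrightarrow> K i = coeff A d ^ N * f i) \<and> (\<forall>j. 1 \<le> j \<longrightarrow> j \<le> N \<longrightarrow> conv A K j = coeff A d ^ N * n j)"
proof (induction N)
  case 0
  then show ?case by (intro exI[of _ f]) auto
next
  case (Suc N)
  define ad where "ad = coeff A d"
  from Suc obtain K where K1: "\<forall>i. i \<le> d \<longrightarrow> K i = ad ^ N * f i"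
    and K2: "\<forall>j. 1 \<le> j \<longrightarrow> j \<le> N \<longrightarrow> conv A K j = ad ^ N * n j" by (auto simp: ad_def)
  define t where "t = Suc N + d"
  define S where "S = (\<Sum>i<d. coeff A i * K (Suc N + i))"
  define K0 where "K0 = (\<lambda>i. ad * K i)"
  define K' where "K' = K0(t := ad ^ N * n (Suc N) - S)"
  have rowN: "conv A K' (Suc N) = ad ^ Suc N * n (Suc N)"
  proof -
    have "conv A K' (Suc N) = (\<Sum>i<Suc d. coeff A i * K' (Suc N + i))"
      by (simp add: conv_def d lessThan_Suc_atMost)
    also have "\<dots> = (\<Sum>i<d. coeff A i * K' (Suc N + i)) + ad * K' t"
      by (simp add: ad_def t_def)
    also have "(\<Sum>i<d. coeff A i * K' (Suc N + i)) = ad * S"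
      unfolding S_def sum_distrib_left by (intro sum.cong) (auto simp: K'_def K0_def t_def)
    also have "K' t = ad ^ N * n (Suc N) - S" by (simp add: K'_def)
    finally show ?thesis by (simp add: algebra_simps)
  qed
  show ?case
  proof (intro exI[of _ K'] conjI allI impI)
    fix i assume "i \<le> d"
    then show "K' i = coeff A d ^ Suc N * f i" using K1 by (simp add: K'_def K0_def t_def ad_def)
  next
    fix j assume j: "1 \<le> j" "j \<le> Suc N"
    show "conv A K' j = coeff A d ^ Suc N * n j"
    proof (cases "j = Suc N")
      case True then show ?thesis using rowN by (simp add: ad_def)
    next
      case False
      then have "j \<le> N" using j by simp
      have "conv A K' j = conv A K0 j"
        unfolding K'_def by (rule conv_cong) (use \<open>j \<le> N\<close> d in \<open>auto simp: t_def\<close>)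
      also have "\<dots> = ad * conv A K j" by (simp add: K0_def conv_scale_seq)
      finally show ?thesis using K2 j \<open>j \<le> N\<close> by (simp add: ad_def)
    qed
  qed
qed

lemma prime_not_dvd_coeff:
  fixes A :: "int poly" and p :: int
  assumes "content A = 1" "prime p"
  shows "\<exists>s. \<not> p dvd coeff A s"
proof (rule ccontr)
  assume "\<not> ?thesis"
  then have all: "\<forall>s. p dvd coeff A s" by auto
  define q where "q = map_poly (\<lambda>x. x div p) A"
  have "coeff (smult p q) i = coeff A i" for i
  proof -
    have "coeff (smult p q) i = p * (coeff A i div p)" by (simp add: q_def coeff_map_poly)
    also have "\<dots> = coeff A i" using all by (meson dvd_mult_div_cancel)
    finally show ?thesis .
  qed
  then have "smult p q = A" by (intro poly_eqI)
  moreover have "smult p q = [:p:] * q" by simp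
  ultimately have "[:p:] dvd A" by (metis dvdI)
  then have "p dvd content A" by (simp only: const_poly_dvd_iff_dvd_content)
  then have "p dvd 1" using assms(1) by simp
  then show False using assms(2) by (meson not_prime_unit)
qed

lemma modp:
  fixes A :: "int poly" and p :: int
  assumes "content A = 1" "prime p"
  shows "\<exists>K. \<forall>j. 1 \<le> j \<longrightarrow> j \<le> N \<longrightarrow> p dvd (conv A K j - n j)"
proof -
  define s where "s = (LEAST s. \<not> p dvd coeff A s)"
  have s1: "\<not> p dvd coeff A s" unfolding s_def using prime_not_dvd_coeff[OF assms] by (metis LeastI)
  have s2: "p dvd coeff A i" if "i < s" for i using that not_less_Least s_def by blast
  have "coprime p (coeff A s)" using s1 assms(2) by (simp add: prime_imp_coprime)
  then obtain u v where uv: "u * coeff A s + v * p = 1"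
    using bezout_int[of "coeff A s" p] by (auto simp: coprime_iff_gcd_eq_1 gcd.commute)
  have P: "\<exists>K. \<forall>j. N - k < j \<longrightarrow> j \<le> N \<longrightarrow> p dvd (conv A K j - n j)" if "k \<le> N" for k
    using that
  proof (induction k)
    case 0 then show ?case by auto
  next
    case (Suc k)
    then obtain K where K: "\<forall>j. N - k < j \<longrightarrow> j \<le> N \<longrightarrow> p dvd (conv A K j - n j)" by auto
    define j0 where "j0 = N - k"
    define t where "t = j0 + s"
    define v0 where "v0 = u * (n j0 - conv A K j0)"
    define K' where "K' = K(t := K t + v0)"
    have c: "conv A K' j = conv A K j + (if j \<le> t \<and> t - j \<le> degree A then coeff A (t - j) * v0 else 0)" for j
      unfolding K'_def by (rule conv_upd)
    show ?case
    proof (intro exI[of _ K'] allI impI)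
      fix j assume j: "N - Suc k < j" "j \<le> N"
      show "p dvd (conv A K' j - n j)"
      proof (cases "j = j0")
        case True
        have sd: "s \<le> degree A"
          using s1 by (metis coeff_eq_0 dvd_0_right not_le)
        have "conv A K' j - n j = (coeff A s * u - 1) * (n j0 - conv A K j0)"
          using True sd by (simp add: c t_def v0_def algebra_simps)
        also have "coeff A s * u - 1 = - v * p" using uv by (simp add: algebra_simps)
        finally show ?thesis by simp
      next
        case False
        then have "N - k < j" using j Suc.prems unfolding j0_def by linarith
        then have "j0 < j" unfolding j0_def by simp
        define X where "X = (if j \<le> t \<and> t - j \<le> degree A then coeff A (t - j) * v0 else 0)"
        have X: "p dvd X"
          using s2[of "t - j"] \<open>j0 < j\<close> by (auto simp: t_def X_def)
        have "conv A K' j - n j = (conv A K j - n j) + X" by (simp add: c X_def)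
        moreover have "p dvd (conv A K j - n j)" using K \<open>N - k < j\<close> j by blast
        ultimately show ?thesis using X by (metis dvd_add)
      qed
    qed
  qed
  from P[of N] obtain K where "\<forall>j. 0 < j \<longrightarrow> j \<le> N \<longrightarrow> p dvd (conv A K j - n j)" by auto
  then show ?thesis by (intro exI[of _ K]) auto
qed

lemma surj_mod:
  fixes A :: "int poly" and r :: nat
  assumes "content A = 1" "r > 0"
  shows "\<exists>K e. \<forall>j. 1 \<le> j \<longrightarrow> j \<le> N \<longrightarrow> conv A K j = n j + int r * e j"
  using assms(2)
proof (induction r arbitrary: n rule: less_induct)
  case (less r)
  show ?case
  proof (cases "r = 1")
    case True
    show ?thesis
      apply (rule exI[of _ "\<lambda>_. 0"])
      apply (rule exI[of _ "\<lambda>j. - n j"])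
      using True by (simp add: conv_def)
  next
    case False
    then obtain p where p: "prime p" "p dvd r" using prime_factor_nat by blast
    then obtain r' where r': "r = p * r'" by (auto elim: dvdE)
    have "p > 1" using p(1) by (rule prime_gt_1_nat)
    then have "r' > 0" "r' < r" using less.prems r' by auto
    from less.IH[OF \<open>r' < r\<close> \<open>r' > 0\<close>, of n] obtain K1 e1 where
      K1: "\<forall>j. 1 \<le> j \<longrightarrow> j \<le> N \<longrightarrow> conv A K1 j = n j + int r' * e1 j" by auto
    have "prime (int p)" using p by simp
    from modp[OF assms(1) this, of N "\<lambda>j. - e1 j"] obtain K2 where
      K2: "\<forall>j. 1 \<le> j \<longrightarrow> j \<le> N \<longrightarrow> int p dvd (conv A K2 j - - e1 j)" by auto
    define e2 where "e2 = (\<lambda>j. (conv A K2 j + e1 j) div int p)"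
    have e2: "conv A K2 j = - e1 j + int p * e2 j" if "1 \<le> j" "j \<le> N" for j
      using K2 that by (simp add: e2_def)
    show ?thesis
    proof (rule exI[of _ "\<lambda>i. K1 i + int r' * K2 i"], rule exI[of _ e2], intro allI impI)
      fix j assume j: "1 \<le> j" "j \<le> N"
      have "conv A (\<lambda>i. K1 i + int r' * K2 i) j = conv A K1 j + int r' * conv A K2 j"
        by (simp add: conv_plus_seq conv_scale_seq)
      also have "\<dots> = n j + int r' * e1 j + int r' * (- e1 j + int p * e2 j)"
        using K1 e2[OF j] j by simp
      also have "\<dots> = n j + int r * e2 j" using r' by (simp add: algebra_simps)
      finally show "conv A (\<lambda>i. K1 i + int r' * K2 i) j = n j + int r * e2 j" .
    qed
  qed
qed

lemma surj:
  fixes A :: "int poly"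
  assumes "content A = 1" "degree A = d"
  shows "\<exists>K. \<forall>j. 1 \<le> j \<longrightarrow> j \<le> N \<longrightarrow> conv A K j = n j"
proof -
  define ad where "ad = coeff A d"
  have "A \<noteq> 0" using assms(1) by auto
  then have "ad \<noteq> 0" using assms(2) unfolding ad_def by (metis leading_coeff_0_iff)
  define r where "r = nat (ad ^ N * ad ^ N)"
  have rr: "int r = ad ^ N * ad ^ N" unfolding r_def by simp
  have "ad ^ N \<noteq> 0" using \<open>ad \<noteq> 0\<close> by simp
  then have "0 < ad ^ N * ad ^ N" by (metis mult_pos_pos mult_neg_neg neq_iff)
  then have "r > 0" unfolding r_def by simp
  from surj_mod[OF assms(1) this, of N n] obtain K1 e where
    K1: "\<forall>j. 1 \<le> j \<longrightarrow> j \<le> N \<longrightarrow> conv A K1 j = n j + int r * e j" by auto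
  from scale_ext[OF assms(2), where f="\<lambda>_. 0" and N=N and n="\<lambda>j. - (ad ^ N * e j)"] obtain K2 where
    K2: "\<forall>j. 1 \<le> j \<longrightarrow> j \<le> N \<longrightarrow> conv A K2 j = ad ^ N * - (ad ^ N * e j)" by (auto simp: ad_def)
  show ?thesis
  proof (intro exI[of _ "\<lambda>i. K1 i + K2 i"] allI impI)
    fix j assume "1 \<le> j" "j \<le> N"
    then show "conv A (\<lambda>i. K1 i + K2 i) j = n j" using K1 K2 rr by (simp add: conv_plus_seq algebra_simps)
  qed
qed



lemma rec_bound:
  fixes a :: "real poly" and e :: "nat \<Rightarrow> real"
  assumes deg: "degree a = d" and ad: "\<bar>coeff a d\<bar> \<ge> 1"
    and rec: "\<forall>j. 1 \<le> j \<longrightarrow> j \<le> n \<longrightarrow> conv a e j = 0"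
    and B: "\<forall>i. 1 \<le> i \<longrightarrow> i \<le> d \<longrightarrow> \<bar>e i\<bar> \<le> B" and B0: "B \<ge> 0"
  shows "\<forall>l. 1 \<le> l \<longrightarrow> l \<le> n + d \<longrightarrow> \<bar>e l\<bar> \<le> (1 + (\<Sum>i\<le>d. \<bar>coeff a i\<bar>)) ^ l * B"
proof -
  define C where "C = 1 + (\<Sum>i\<le>d. \<bar>coeff a i\<bar>)"
  have C1: "C \<ge> 1" unfolding C_def by (simp add: sum_nonneg)
  have "\<bar>e l\<bar> \<le> C ^ l * B" if "1 \<le> l" "l \<le> n + d" for l
    using that
  proof (induction l rule: less_induct)
    case (less l)
    show ?case
    proof (cases "l \<le> d")
      case True
      have "B \<le> C ^ l * B" using C1 B0 by (simp add: mult_le_cancel_right1 one_le_power)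
      then show ?thesis using B less.prems True by (meson order_trans)
    next
      case False
      define j where "j = l - d"
      have j: "1 \<le> j" "j \<le> n" "l = j + d" using False less.prems by (auto simp: j_def)
      have "0 = conv a e j" using rec j by simp
      also have "\<dots> = (\<Sum>i<d. coeff a i * e (j + i)) + coeff a d * e l"
        by (simp add: conv_def deg lessThan_Suc_atMost[symmetric] j(3) add.commute)
      finally have eq: "coeff a d * e l = - (\<Sum>i<d. coeff a i * e (j + i))" by linarith
      have ih: "\<bar>e (j + i)\<bar> \<le> C ^ (l - 1) * B" if "i < d" for i
      proof -
        have "\<bar>e (j + i)\<bar> \<le> C ^ (j + i) * B" using less.IH[of "j + i"] j that by auto
        also have "\<dots> \<le> C ^ (l - 1) * B"
          using C1 B0 j that by (intro mult_right_mono power_increasing) auto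
        finally show ?thesis .
      qed
      have "\<bar>e l\<bar> \<le> \<bar>coeff a d\<bar> * \<bar>e l\<bar>" using ad by (simp add: mult_le_cancel_right1)
      also have "\<dots> = \<bar>\<Sum>i<d. coeff a i * e (j + i)\<bar>" using eq by (metis abs_minus_cancel abs_mult)
      also have "\<dots> \<le> (\<Sum>i<d. \<bar>coeff a i\<bar> * \<bar>e (j + i)\<bar>)"
        by (rule order_trans[OF sum_abs]) (simp add: abs_mult)
      also have "\<dots> \<le> (\<Sum>i<d. \<bar>coeff a i\<bar> * (C ^ (l - 1) * B))"
        by (intro sum_mono mult_left_mono ih) auto
      also have "\<dots> = (\<Sum>i<d. \<bar>coeff a i\<bar>) * (C ^ (l - 1) * B)" by (simp add: sum_distrib_right)
      also have "\<dots> \<le> C * (C ^ (l - 1) * B)"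
      proof -
        have "(\<Sum>i<d. \<bar>coeff a i\<bar>) \<le> C" unfolding C_def
          by (smt (verit, ccfv_SIG) abs_ge_zero lessThan_Suc_atMost sum.lessThan_Suc)
        then show ?thesis using B0 C1 by (intro mult_right_mono) auto
      qed
      also have "\<dots> = C ^ l * B"
      proof -
        have "l = Suc (l - 1)" using j by simp
        then have "C ^ l = C * C ^ (l - 1)" by (metis power_Suc)
        then show ?thesis by simp
      qed
      finally show ?thesis .
    qed
  qed
  then show ?thesis unfolding C_def by blast
qed

lemma indep_inj:
  fixes \<theta> :: "nat \<Rightarrow> real" and N :: int
  assumes N0: "N \<noteq> 0"
    and hyp: "\<forall>q::nat \<Rightarrow> rat. (\<Sum>i=1..d. of_rat (q i) * \<theta> i) = 0 \<longrightarrow> (\<forall>i\<in>{1..d}. q i = 0)"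
  shows "inj_on (\<lambda>i. \<theta> (Suc i) / of_int N) {..<d}"
proof (rule inj_onI, rule ccontr)
  fix a b assume ab: "a \<in> {..<d}" "b \<in> {..<d}" "\<theta> (Suc a) / of_int N = \<theta> (Suc b) / of_int N" "a \<noteq> b"
  then have eq: "\<theta> (Suc a) = \<theta> (Suc b)" using N0 by (simp add: divide_cancel_right)
  define q :: "nat \<Rightarrow> rat" where "q = (\<lambda>i. if i = Suc a then 1 else if i = Suc b then -1 else 0)"
  have "(\<Sum>i=1..d. of_rat (q i) * \<theta> i) = (\<Sum>i\<in>{1..d}. (if i = Suc a then \<theta> (Suc a) else 0) - (if i = Suc b then \<theta> (Suc b) else 0))"
    by (intro sum.cong) (use ab in \<open>auto simp: q_def\<close>)
  also have "\<dots> = 0" using ab eq by (simp add: sum_subtractf)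
  finally have "q (Suc a) = 0" using hyp ab by auto
  then show False by (simp add: q_def)
qed

lemma indep_mod:
  fixes \<theta> :: "nat \<Rightarrow> real" and N :: int
  assumes N0: "N \<noteq> 0"
    and hyp: "\<forall>q::nat \<Rightarrow> rat. (\<Sum>i=1..d. of_rat (q i) * \<theta> i) = 0 \<longrightarrow> (\<forall>i\<in>{1..d}. q i = 0)"
  shows "module.independent (\<lambda>r. (*) (real_of_int r)) ((\<lambda>i. \<theta> (Suc i) / of_int N) ` {..<d})"
proof -
  interpret Modules.module "(\<lambda>r. (*) (real_of_int r))"
    by (simp add: Modules.module.intro distrib_left mult.commute)
  define \<theta>' where "\<theta>' = (\<lambda>i. \<theta> (Suc i) / of_int N)"
  have inj: "inj_on \<theta>' {..<d}" unfolding \<theta>'_def by (rule indep_inj[OF N0 hyp])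
  show ?thesis
    unfolding \<theta>'_def[symmetric] independent_explicit_module
  proof (intro allI impI)
    fix t u v assume t: "finite t" "t \<subseteq> \<theta>' ` {..<d}" and s: "(\<Sum>v\<in>t. real_of_int (u v) * v) = 0" and v: "v \<in> t"
    define I where "I = {i. i < d \<and> \<theta>' i \<in> t}"
    have tI: "t = \<theta>' ` I" using t(2) by (auto simp: I_def)
    have injI: "inj_on \<theta>' I" using inj by (rule inj_on_subset) (auto simp: I_def)
    define q :: "nat \<Rightarrow> rat" where
      "q = (\<lambda>i. if 1 \<le> i \<and> \<theta>' (i - 1) \<in> t then of_int (u (\<theta>' (i - 1))) / of_int N else 0)"
    have "(\<Sum>i=1..d. of_rat (q i) * \<theta> i) = (\<Sum>i\<in>Suc ` {..<d}. of_rat (q i) * \<theta> i)"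
    proof -
      have "{1..d} = Suc ` {..<d}" by (auto simp: image_iff) (metis Suc_pred' less_eq_Suc_le not_less_eq_eq zero_less_Suc atMost_iff lessThan_iff diff_Suc_1 Suc_le_lessD le_simps(3) gr0I)
      then show ?thesis by simp
    qed
    also have "\<dots> = (\<Sum>i<d. of_rat (q (Suc i)) * \<theta> (Suc i))"
      by (subst sum.reindex) auto
    also have "\<dots> = (\<Sum>i<d. if \<theta>' i \<in> t then real_of_int (u (\<theta>' i)) * \<theta>' i else 0)"
      by (intro sum.cong) (auto simp: q_def \<theta>'_def of_rat_divide)
    also have "\<dots> = (\<Sum>i\<in>I. real_of_int (u (\<theta>' i)) * \<theta>' i)"
      unfolding I_def by (simp add: sum.If_cases Collect_conj_eq lessThan_def Int_commute)
    also have "\<dots> = (\<Sum>v\<in>t. real_of_int (u v) * v)"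
      unfolding tI by (simp add: sum.reindex[OF injI])
    finally have "(\<Sum>i=1..d. of_rat (q i) * \<theta> i) = 0" using s by simp
    then have q0: "\<forall>i\<in>{1..d}. q i = 0" using hyp by blast
    obtain i where i: "i \<in> I" "v = \<theta>' i" using v tI by auto
    have "q (Suc i) = 0" using q0 i by (auto simp: I_def)
    then show "u v = 0" using i N0 by (auto simp: q_def I_def)
  qed
qed

lemma kron_main:
  fixes A :: "int poly" and \<theta> y :: "nat \<Rightarrow> real" and n d :: nat and \<delta> :: real
  assumes deg: "degree A = d" and cont: "content A = 1"
    and hyp: "\<forall>q::nat \<Rightarrow> rat. (\<Sum>i=1..d. of_rat (q i) * \<theta> i) = 0 \<longrightarrow> (\<forall>i\<in>{1..d}. q i = 0)"
    and rec: "\<forall>j. 1 \<le> j \<longrightarrow> j \<le> n \<longrightarrow> conv (map_poly of_int A) \<theta> j = 0"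
    and yint: "\<forall>j. 1 \<le> j \<longrightarrow> j \<le> n \<longrightarrow> conv (map_poly of_int A) y j \<in> \<int>"
    and \<delta>: "\<delta> > 0"
  shows "\<exists>t K. \<forall>l. 1 \<le> l \<longrightarrow> l \<le> n + d \<longrightarrow> \<bar>t * \<theta> l - y l - of_int (K l)\<bar> < \<delta>"
proof -
  define a :: "real poly" where "a = map_poly of_int A"
  have dega: "degree a = d" unfolding a_def using deg by (simp add: degree_map_poly)
  define ad where "ad = coeff A d"
  have "A \<noteq> 0" using cont by auto
  then have ad0: "ad \<noteq> 0" using deg unfolding ad_def by (metis leading_coeff_0_iff)
  have cad: "coeff a d = of_int ad" by (simp add: a_def ad_def coeff_map_poly)
  have ad1: "\<bar>coeff a d\<bar> \<ge> 1" using ad0 cad by simp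
  define nv where "nv = (\<lambda>j. \<lfloor>conv a y j\<rfloor>)"
  have nv: "conv a y j = of_int (nv j)" if "1 \<le> j" "j \<le> n" for j
    using yint that unfolding nv_def a_def by (metis Ints_cases floor_of_int)
  obtain k0 where k0: "\<forall>j. 1 \<le> j \<longrightarrow> j \<le> n \<longrightarrow> conv A k0 j = nv j"
    using surj[OF cont deg, of n nv] by blast
  define v where "v = (\<lambda>l. y l - of_int (k0 l))"
  have vrec: "conv a v j = 0" if "1 \<le> j" "j \<le> n" for j
  proof -
    have "conv a v j = conv a y j - conv a (\<lambda>l. of_int (k0 l)) j" unfolding v_def by (rule conv_diff)
    also have "conv a (\<lambda>l. of_int (k0 l)) j = of_int (conv A k0 j)" unfolding a_def by (rule conv_of_int_real)
    finally show ?thesis using nv[OF that] k0 that by simp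
  qed
  define N where "N = ad ^ n"
  have N0: "N \<noteq> 0" using ad0 by (simp add: N_def)
  define Nr where "Nr = real_of_int N"
  have Nr0: "Nr \<noteq> 0" using N0 by (simp add: Nr_def)
  define C where "C = 1 + (\<Sum>i\<le>d. \<bar>coeff a i\<bar>)"
  have C1: "C \<ge> 1" unfolding C_def by (simp add: sum_nonneg)
  define \<epsilon> where "\<epsilon> = \<delta> / (2 * \<bar>Nr\<bar> * C ^ (n + d))"
  have \<epsilon>0: "\<epsilon> > 0" unfolding \<epsilon>_def using \<delta> Nr0 C1 by (intro divide_pos_pos mult_pos_pos) auto
  define \<theta>' where "\<theta>' = (\<lambda>i. \<theta> (Suc i) / of_int N)"
  obtain t h where th: "\<And>i. i < d \<Longrightarrow> \<bar>t * \<theta>' i - of_int (h i) - v (Suc i) / Nr\<bar> < \<epsilon>"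
    using Kronecker_thm_1[of \<theta>' d \<epsilon> "\<lambda>i. v (Suc i) / Nr"] indep_mod[OF N0 hyp] indep_inj[OF N0 hyp] \<epsilon>0
    unfolding \<theta>'_def by blast
  obtain K where K1: "\<forall>i. i \<le> d \<longrightarrow> K i = ad ^ n * h (i - 1)"
    and K2: "\<forall>j. 1 \<le> j \<longrightarrow> j \<le> n \<longrightarrow> conv A K j = ad ^ n * 0"
    using scale_ext[OF deg, where f = "\<lambda>i. h (i - 1)" and N = n and n = "\<lambda>_. 0"] unfolding ad_def by blast
  define e where "e = (\<lambda>l. t * \<theta> l - v l - of_int (K l))"
  have erec: "\<forall>j. 1 \<le> j \<longrightarrow> j \<le> n \<longrightarrow> conv a e j = 0"
  proof (intro allI impI)
    fix j assume j: "1 \<le> j" "j \<le> n"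
    have "conv a e j = conv a (\<lambda>l. t * \<theta> l) j - conv a v j - conv a (\<lambda>l. of_int (K l)) j"
      unfolding e_def by (simp only: conv_diff)
    also have "\<dots> = t * conv a \<theta> j - conv a v j - of_int (conv A K j)"
      by (simp add: conv_scale_seq a_def conv_of_int_real)
    finally show "conv a e j = 0" using rec j vrec[OF j] K2 by (simp add: a_def)
  qed
  define B where "B = \<bar>Nr\<bar> * \<epsilon>"
  have B0: "B \<ge> 0" using \<epsilon>0 by (simp add: B_def)
  have eB: "\<forall>i. 1 \<le> i \<longrightarrow> i \<le> d \<longrightarrow> \<bar>e i\<bar> \<le> B"
  proof (intro allI impI)
    fix i assume i: "1 \<le> i" "i \<le> d"
    have ie: "i = Suc (i - 1)" using i by simp
    have "e i = Nr * (t * \<theta>' (i - 1) - of_int (h (i - 1)) - v (Suc (i - 1)) / Nr)"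
      using K1 i Nr0 ie ad0 by (simp add: e_def \<theta>'_def Nr_def N_def field_simps)
    then have "\<bar>e i\<bar> = \<bar>Nr\<bar> * \<bar>t * \<theta>' (i - 1) - of_int (h (i - 1)) - v (Suc (i - 1)) / Nr\<bar>"
      by (simp add: abs_mult)
    also have "\<dots> \<le> \<bar>Nr\<bar> * \<epsilon>"
    proof -
      have "i - 1 < d" using i by simp
      from th[OF this] have "\<bar>t * \<theta>' (i - 1) - of_int (h (i - 1)) - v (Suc (i - 1)) / Nr\<bar> \<le> \<epsilon>" by simp
      then show ?thesis by (intro mult_left_mono) auto
    qed
    finally show "\<bar>e i\<bar> \<le> B" by (simp add: B_def)
  qed
  have eb: "\<forall>l. 1 \<le> l \<longrightarrow> l \<le> n + d \<longrightarrow> \<bar>e l\<bar> \<le> C ^ l * B"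
    using rec_bound[OF dega ad1 erec eB B0] unfolding C_def .
  show ?thesis
  proof (intro exI[of _ t] exI[of _ "\<lambda>l. K l - k0 l"] allI impI)
    fix l assume l: "1 \<le> l" "l \<le> n + d"
    have "\<bar>t * \<theta> l - y l - of_int (K l - k0 l)\<bar> = \<bar>e l\<bar>" by (simp add: e_def v_def algebra_simps)
    also have "\<dots> \<le> C ^ l * B" using eb l by blast
    also have "\<dots> \<le> C ^ (n + d) * B" using C1 B0 l by (intro mult_right_mono power_increasing) auto
    also have "\<dots> = \<delta> / 2" using Nr0 C1 unfolding B_def \<epsilon>_def by (simp add: field_simps)
    also have "\<dots> < \<delta>" using \<delta> by simp
    finally show "\<bar>t * \<theta> l - y l - of_int (K l - k0 l)\<bar> < \<delta>" .
  qed
qed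



lemma prodX: "(\<Prod>\<alpha>\<in>#R. max 1 (cmod \<alpha>)) \<le> (\<Prod>\<alpha>\<in>#R. max (1/2) (cmod \<alpha>)) * 2 ^ size (filter_mset (\<lambda>\<alpha>. cmod \<alpha> < 1) R)"
proof (induction R)
  case (add a R)
  define P where "P = (\<Prod>\<alpha>\<in>#R. max (1/2) (cmod \<alpha>))"
  define Q where "Q = (\<Prod>\<alpha>\<in>#R. max 1 (cmod \<alpha>))"
  define k where "k = size (filter_mset (\<lambda>\<alpha>. cmod \<alpha> < 1) R)"
  have Q0: "Q \<ge> 0" unfolding Q_def by (induction R) auto
  have IH: "Q \<le> P * 2 ^ k" using add.IH by (simp add: P_def Q_def k_def)
  show ?case
  proof (cases "cmod a < 1")
    case True
    have "max 1 (cmod a) * Q \<le> (2 * max (1/2) (cmod a)) * (P * 2 ^ k)"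
      using True IH Q0 by (intro mult_mono) auto
    then show ?thesis using True by (simp add: P_def Q_def k_def mult_ac)
  next
    case False
    have "max 1 (cmod a) * Q \<le> max (1/2) (cmod a) * (P * 2 ^ k)"
      using False IH Q0 by (intro mult_mono) auto
    then show ?thesis using False by (simp add: P_def Q_def k_def mult_ac)
  qed
qed simp

lemma prodY: "(\<Prod>\<alpha>\<in>#R. max 1 (cmod \<alpha>)) \<le> (\<Prod>\<alpha>\<in>#R. max 1 (cmod \<alpha> / 2)) * 2 ^ size (filter_mset (\<lambda>\<alpha>. cmod \<alpha> > 1) R)"
proof (induction R)
  case (add a R)
  define P where "P = (\<Prod>\<alpha>\<in>#R. max 1 (cmod \<alpha> / 2))"
  define Q where "Q = (\<Prod>\<alpha>\<in>#R. max 1 (cmod \<alpha>))"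
  define k where "k = size (filter_mset (\<lambda>\<alpha>. cmod \<alpha> > 1) R)"
  have Q0: "Q \<ge> 0" unfolding Q_def by (induction R) auto
  have IH: "Q \<le> P * 2 ^ k" using add.IH by (simp add: P_def Q_def k_def)
  show ?case
  proof (cases "cmod a > 1")
    case True
    have "max 1 (cmod a) * Q \<le> (2 * max 1 (cmod a / 2)) * (P * 2 ^ k)"
      using True IH Q0 by (intro mult_mono) auto
    then show ?thesis using True by (simp add: P_def Q_def k_def mult_ac)
  next
    case False
    have "max 1 (cmod a) * Q \<le> max 1 (cmod a / 2) * (P * 2 ^ k)"
      using False IH Q0 by (intro mult_mono) auto
    then show ?thesis using False by (simp add: P_def Q_def k_def mult_ac)
  qed
qed simp

lemma size_filters: "size (filter_mset (\<lambda>\<alpha>. cmod \<alpha> < 1) R) + size (filter_mset (\<lambda>\<alpha>. cmod \<alpha> > 1) R) \<le> size R"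
  by (induction R) auto

lemma prod_pos_max: "(\<Prod>\<alpha>\<in>#R. max (b::real) (f \<alpha>)) > 0" if "b > 0"
  using that by (induction R) (auto intro!: mult_pos_pos)

lemma part2:
  fixes R :: "complex multiset" and c :: real
  assumes "c > 0"
  shows "min (1 / (c * (\<Prod>\<alpha>\<in>#R. max (1/2) (cmod \<alpha>)))) (1 / (c * (\<Prod>\<alpha>\<in>#R. max 1 (cmod \<alpha> / 2))))
         \<le> 2 ^ (size R div 2) / (c * (\<Prod>\<alpha>\<in>#R. max 1 (cmod \<alpha>)))"
proof -
  define X where "X = (\<Prod>\<alpha>\<in>#R. max (1/2) (cmod \<alpha>))"
  define Y where "Y = (\<Prod>\<alpha>\<in>#R. max 1 (cmod \<alpha> / 2))"
  define Z where "Z = (\<Prod>\<alpha>\<in>#R. max 1 (cmod \<alpha>))"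
  define k where "k = size (filter_mset (\<lambda>\<alpha>. cmod \<alpha> < 1) R)"
  define l where "l = size (filter_mset (\<lambda>\<alpha>. cmod \<alpha> > 1) R)"
  have X0: "X > 0" unfolding X_def by (rule prod_pos_max) simp
  have Y0: "Y > 0" unfolding Y_def by (rule prod_pos_max) simp
  have Z0: "Z > 0" unfolding Z_def by (rule prod_pos_max) simp
  have hX: "Z \<le> X * 2 ^ k" unfolding X_def Z_def k_def by (rule prodX)
  have hY: "Z \<le> Y * 2 ^ l" unfolding Y_def Z_def l_def by (rule prodY)
  have kl: "k + l \<le> size R" unfolding k_def l_def by (rule size_filters)
  define h where "h = size R div 2"
  have "min (1 / (c * X)) (1 / (c * Y)) \<le> 2 ^ h / (c * Z)"
  proof (cases "k \<le> l")
    case True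
    then have "k \<le> h" using kl unfolding h_def by linarith
    have "Z \<le> X * 2 ^ h" using hX \<open>k \<le> h\<close> X0
      by (meson order_trans mult_left_mono power_increasing one_le_numeral less_imp_le)
    then have "1 / (c * X) \<le> 2 ^ h / (c * Z)" using X0 Z0 assms by (simp add: field_simps)
    then show ?thesis by (meson min.coboundedI1)
  next
    case False
    then have "l \<le> h" using kl unfolding h_def by linarith
    have "Z \<le> Y * 2 ^ h" using hY \<open>l \<le> h\<close> Y0
      by (meson order_trans mult_left_mono power_increasing one_le_numeral less_imp_le)
    then have "1 / (c * Y) \<le> 2 ^ h / (c * Z)" using Y0 Z0 assms by (simp add: field_simps)
    then show ?thesis by (meson min.coboundedI2)
  qed
  then show ?thesis by (simp add: X_def Y_def Z_def h_def)
qed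

theorem theorem1:
  fixes m d :: nat and A :: "int poly" and \<theta> :: "nat \<Rightarrow> real"
  assumes "0 < d" and "d \<le> m"
    and "degree A = d" and "content A = 1" and "coeff A 0 \<noteq> 0"
    and "\<forall>q::nat \<Rightarrow> rat. (\<Sum>i=1..d. of_rat (q i) * \<theta> i) = 0 \<longrightarrow> (\<forall>i\<in>{1..d}. q i = 0)"
    and "\<forall>j\<in>{1..m-d}. (\<Sum>i=0..d. of_int (coeff A i) * \<theta> (j + i)) = 0"
  shows "(\<forall>\<epsilon>::real. \<epsilon> \<ge> min (1 / mahler_measure (map_poly of_int A \<circ>\<^sub>p [:0, 1/2:]))
                                  (2 ^ d / mahler_measure (map_poly of_int A \<circ>\<^sub>p [:0, 2:]))
                 \<longrightarrow> eps_dense m \<epsilon> (S_line \<theta>))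
       \<and> min (1 / mahler_measure (map_poly of_int A \<circ>\<^sub>p [:0, 1/2:]))
             (2 ^ d / mahler_measure (map_poly of_int A \<circ>\<^sub>p [:0, 2:]))
           \<le> 2 ^ (d div 2) / mahler_measure (map_poly of_int A)
       \<and> (\<forall>\<epsilon>::real. \<epsilon> \<ge> 2 ^ (d div 2) / mahler_measure (map_poly of_int A)
                 \<longrightarrow> eps_dense m \<epsilon> (S_line \<theta>))"
proof -
  note d0 = assms(1) and dm = assms(2) and deg = assms(3) and cont = assms(4) and a0 = assms(5)
    and hyp = assms(6) and rec0 = assms(7)
  define n where "n = m - d"
  have mnd: "m = n + d" using dm by (simp add: n_def)
  define AC :: "complex poly" where "AC = map_poly of_int A"
  define a :: "real poly" where "a = map_poly of_int A"
  define R where "R = proots AC"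
  define ad where "ad = coeff A d"
  have "A \<noteq> 0" using cont by auto
  then have ad0: "ad \<noteq> 0" using deg unfolding ad_def by (metis leading_coeff_0_iff)
  define c :: real where "c = of_int ad"
  have c0: "c \<noteq> 0" using ad0 by (simp add: c_def)
  have degAC: "degree AC = d" unfolding AC_def using deg by (simp add: degree_map_poly)
  have lcAC: "lead_coeff AC = of_real c" unfolding AC_def c_def ad_def using deg
    by (simp add: degree_map_poly coeff_map_poly)
  have facAC: "AC = smult (of_real c) (linprod R)"
    using complex_poly_decompose_multiset[of AC] unfolding R_def linprod_def lcAC by simp
  have sizeR: "size R = d" unfolding R_def using degAC by (simp add: size_proots_complex)
  have fac: "map_poly of_real a = smult (of_real c) (linprod R)"
  proof -
    have "map_poly of_real a = AC" unfolding a_def AC_def by (simp add: map_poly_map_poly o_def)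
    then show ?thesis using facAC by simp
  qed
  have cj: "image_mset cnj R = R"
  proof -
    have "map_poly cnj AC = AC" unfolding AC_def by (rule poly_eqI) (simp add: coeff_map_poly)
    moreover have "map_poly cnj AC = smult (of_real c) (linprod (image_mset cnj R))"
      by (subst facAC, subst map_poly_smult) (auto simp: linprod_cnj)
    ultimately have "proots AC = proots (smult (of_real c) (linprod (image_mset cnj R)))" by simp
    then show ?thesis using c0 by (simp add: R_def proots_linprod)
  qed
  have a0': "coeff a 0 \<noteq> 0" using a0 by (simp add: a_def coeff_map_poly)
  have dega: "degree a = d" unfolding a_def using deg by (simp add: degree_map_poly)
  define X where "X = (\<Prod>\<alpha>\<in>#R. max (1/2) (cmod \<alpha>))"
  define Y where "Y = (\<Prod>\<alpha>\<in>#R. max 1 (cmod \<alpha> / 2))"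
  define Z where "Z = (\<Prod>\<alpha>\<in>#R. max 1 (cmod \<alpha>))"
  have MX: "mahler_measure (map_poly of_int A \<circ>\<^sub>p [:0, 1/2:]) = \<bar>c\<bar> * X"
    using mahler_compose[of "of_real c" "1/2" R] c0 by (simp add: facAC[unfolded AC_def] X_def)
  have MY: "2 ^ d / mahler_measure (map_poly of_int A \<circ>\<^sub>p [:0, 2:]) = 1 / (\<bar>c\<bar> * Y)"
  proof -
    have "mahler_measure (map_poly of_int A \<circ>\<^sub>p [:0, 2:]) = \<bar>c\<bar> * (\<Prod>\<alpha>\<in>#R. max 2 (cmod \<alpha>))"
      using mahler_compose[of "of_real c" 2 R] c0 by (simp add: facAC[unfolded AC_def])
    also have "(\<Prod>\<alpha>\<in>#R. max 2 (cmod \<alpha>)) = 2 ^ d * Y"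
      using prod_scale_max[of 2 R] sizeR by (simp add: Y_def)
    finally show ?thesis by simp
  qed
  have MZ: "mahler_measure (map_poly of_int A) = \<bar>c\<bar> * Z"
    using mahler_linprod[of "of_real c" R] c0 by (simp add: facAC[unfolded AC_def] Z_def)
  define \<epsilon>0 where "\<epsilon>0 = min (1 / (\<bar>c\<bar> * X)) (1 / (\<bar>c\<bar> * Y))"
  have P2: "\<epsilon>0 \<le> 2 ^ (d div 2) / (\<bar>c\<bar> * Z)"
    using part2[of "\<bar>c\<bar>" R] c0 sizeR by (simp add: \<epsilon>0_def X_def Y_def Z_def)
  have cover: "\<exists>y. (\<forall>j. \<bar>y j - x j\<bar> \<le> \<epsilon>0 / 2) \<and> (\<forall>j. 1 \<le> j \<longrightarrow> j \<le> n \<longrightarrow> conv a y j \<in> \<int>)" for x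
  proof (cases "1 / (\<bar>c\<bar> * X) \<le> 1 / (\<bar>c\<bar> * Y)")
    case True
    then have e: "\<epsilon>0 / 2 = 1 / (2 * (\<bar>c\<bar> * X))" by (simp add: \<epsilon>0_def)
    show ?thesis using cover1[OF fac c0 cj, of x n] unfolding e X_def by blast
  next
    case False
    then have e: "\<epsilon>0 / 2 = 1 / (2 * (\<bar>c\<bar> * Y))" by (simp add: \<epsilon>0_def)
    show ?thesis using cover2[OF fac c0 cj a0', of x n] unfolding e Y_def by blast
  qed
  have recT: "\<forall>j. 1 \<le> j \<longrightarrow> j \<le> n \<longrightarrow> conv (map_poly of_int A) \<theta> j = 0"
  proof (intro allI impI)
    fix j assume "1 \<le> j" "j \<le> n"
    then have "(\<Sum>i=0..d. of_int (coeff A i) * \<theta> (j + i)) = 0" using rec0 by (auto simp: n_def)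
    then show "conv (map_poly of_int A) \<theta> j = 0"
      by (simp add: conv_def degree_map_poly deg coeff_map_poly atLeast0AtMost)
  qed
  have P1: "eps_dense m \<epsilon> (S_line \<theta>)" if "\<epsilon> \<ge> \<epsilon>0" for \<epsilon>
    unfolding eps_dense_def
  proof (intro allI impI)
    fix \<epsilon>' :: real and x :: "nat \<Rightarrow> real" assume "\<epsilon>' > \<epsilon>"
    then have e': "\<epsilon>' > \<epsilon>0" using that by simp
    obtain y where yb: "\<forall>j. \<bar>y j - x j\<bar> \<le> \<epsilon>0 / 2" and yi: "\<forall>j. 1 \<le> j \<longrightarrow> j \<le> n \<longrightarrow> conv a y j \<in> \<int>"
      using cover by blast
    obtain t K where tK: "\<forall>l. 1 \<le> l \<longrightarrow> l \<le> n + d \<longrightarrow> \<bar>t * \<theta> l - y l - of_int (K l)\<bar> < (\<epsilon>' - \<epsilon>0) / 2"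
      using kron_main[OF deg cont hyp recT yi[unfolded a_def], of "(\<epsilon>' - \<epsilon>0) / 2"] e' by auto
    show "\<exists>s\<in>S_line \<theta>. \<exists>k. \<exists>u. \<forall>i\<in>{1..m}. \<bar>u i\<bar> \<le> \<epsilon>' / 2 \<and> x i = s i + u i + of_int (k i)"
    proof (intro bexI[of _ "\<lambda>i. t * \<theta> i"] exI[of _ "\<lambda>i. - K i"] exI[of _ "\<lambda>i. x i - t * \<theta> i + of_int (K i)"] ballI conjI)
      fix i assume i: "i \<in> {1..m}"
      have "\<bar>x i - t * \<theta> i + of_int (K i)\<bar> \<le> \<bar>y i - x i\<bar> + \<bar>t * \<theta> i - y i - of_int (K i)\<bar>" by linarith
      also have "\<dots> \<le> \<epsilon>0 / 2 + (\<epsilon>' - \<epsilon>0) / 2" using yb tK i mnd by (intro add_mono) (auto intro: less_imp_le)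
      finally show "\<bar>x i - t * \<theta> i + of_int (K i)\<bar> \<le> \<epsilon>' / 2" by (simp add: field_simps)
    next
      fix i show "x i = t * \<theta> i + (x i - t * \<theta> i + of_int (K i)) + of_int (- K i)" by simp
    qed (auto simp: S_line_def)
  qed
  have minEq: "min (1 / mahler_measure (map_poly of_int A \<circ>\<^sub>p [:0, 1/2:]))
                   (2 ^ d / mahler_measure (map_poly of_int A \<circ>\<^sub>p [:0, 2:])) = \<epsilon>0"
    by (simp add: MX MY \<epsilon>0_def)
  show ?thesis
  proof (intro conjI allI impI)
    fix \<epsilon> :: real
    assume "\<epsilon> \<ge> min (1 / mahler_measure (map_poly of_int A \<circ>\<^sub>p [:0, 1/2:]))
                        (2 ^ d / mahler_measure (map_poly of_int A \<circ>\<^sub>p [:0, 2:]))"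
    then show "eps_dense m \<epsilon> (S_line \<theta>)" using P1 minEq by simp
  next
    show "min (1 / mahler_measure (map_poly of_int A \<circ>\<^sub>p [:0, 1/2:]))
             (2 ^ d / mahler_measure (map_poly of_int A \<circ>\<^sub>p [:0, 2:]))
           \<le> 2 ^ (d div 2) / mahler_measure (map_poly of_int A)"
      using P2 minEq MZ by simp
  next
    fix \<epsilon> :: real
    assume "\<epsilon> \<ge> 2 ^ (d div 2) / mahler_measure (map_poly of_int A)"
    then show "eps_dense m \<epsilon> (S_line \<theta>)" using P1 P2 MZ by simp
  qed
qed


end
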